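(* Let $I$ be an inverse semigroup [respectively, inverse monoid], not necessarily finitely generated. If $\Sigma_1$ and $\Sigma_2$ are two semigroup [monoid] generating sets of $I$, with corresponding idempotent problems $L_1$ and $L_2$, then the syntactic semigroups $M^+(L_1)$ and $M^+(L_2)$ are isomorphic [respectively, the syntactic monoids $M(L_1)$ and $M(L_2)$ are isomorphic]. *)

theory Defs
  imports "HOL-Algebra.Group"
begin

text \<open>Algebraic structures are HOL-Algebra records (type 'a monoid); for semigroups
  the field one is simply ignored.\<close>

definition is_semigroup :: "('a, 'm) monoid_scheme \<Rightarrow> bool" where
  "is_semigroup S \<longleftrightarrow>
     (\<forall>x\<in>carrier S. \<forall>y\<in>carrier S. x \<otimes>\<^bsub>S\<^esub> y \<in> carrier S) \<and>
     (\<forall>x\<in>carrier S. \<forall>y\<in>carrier S. \<forall>z\<in>carrier S.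
        (x \<otimes>\<^bsub>S\<^esub> y) \<otimes>\<^bsub>S\<^esub> z = x \<otimes>\<^bsub>S\<^esub> (y \<otimes>\<^bsub>S\<^esub> z))"

definition inverse_semigroup :: "('a, 'm) monoid_scheme \<Rightarrow> bool" where
  "inverse_semigroup S \<longleftrightarrow> is_semigroup S \<and>
     (\<forall>x\<in>carrier S. \<exists>!y. y \<in> carrier S \<and>
        x \<otimes>\<^bsub>S\<^esub> y \<otimes>\<^bsub>S\<^esub> x = x \<and> y \<otimes>\<^bsub>S\<^esub> x \<otimes>\<^bsub>S\<^esub> y = y)"

definition inverse_monoid :: "('a, 'm) monoid_scheme \<Rightarrow> bool" where
  "inverse_monoid S \<longleftrightarrow> monoid S \<and>
     (\<forall>x\<in>carrier S. \<exists>!y. y \<in> carrier S \<and>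
        x \<otimes>\<^bsub>S\<^esub> y \<otimes>\<^bsub>S\<^esub> x = x \<and> y \<otimes>\<^bsub>S\<^esub> x \<otimes>\<^bsub>S\<^esub> y = y)"

definition idempotent_in :: "('a, 'm) monoid_scheme \<Rightarrow> 'a \<Rightarrow> bool" where
  "idempotent_in S e \<longleftrightarrow> e \<in> carrier S \<and> e \<otimes>\<^bsub>S\<^esub> e = e"

definition words_plus :: "'b set \<Rightarrow> 'b list set" where
  "words_plus \<Sigma> = {w. w \<noteq> [] \<and> set w \<subseteq> \<Sigma>}"

definition words_star :: "'b set \<Rightarrow> 'b list set" where
  "words_star \<Sigma> = {w. set w \<subseteq> \<Sigma>}"

fun sg_eval :: "('a, 'm) monoid_scheme \<Rightarrow> ('b \<Rightarrow> 'a) \<Rightarrow> 'b list \<Rightarrow> 'a" where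
  "sg_eval S \<pi> [] = undefined"
| "sg_eval S \<pi> [a] = \<pi> a"
| "sg_eval S \<pi> (a # b # w) = \<pi> a \<otimes>\<^bsub>S\<^esub> sg_eval S \<pi> (b # w)"

definition mon_eval :: "('a, 'm) monoid_scheme \<Rightarrow> ('b \<Rightarrow> 'a) \<Rightarrow> 'b list \<Rightarrow> 'a" where
  "mon_eval S \<pi> w = foldr (\<lambda>a x. \<pi> a \<otimes>\<^bsub>S\<^esub> x) w \<one>\<^bsub>S\<^esub>"

definition sg_generating :: "('a, 'm) monoid_scheme \<Rightarrow> 'b set \<Rightarrow> ('b \<Rightarrow> 'a) \<Rightarrow> bool" where
  "sg_generating S \<Sigma> \<pi> \<longleftrightarrow> \<pi> ` \<Sigma> \<subseteq> carrier S \<and> sg_eval S \<pi> ` words_plus \<Sigma> = carrier S"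

definition mon_generating :: "('a, 'm) monoid_scheme \<Rightarrow> 'b set \<Rightarrow> ('b \<Rightarrow> 'a) \<Rightarrow> bool" where
  "mon_generating S \<Sigma> \<pi> \<longleftrightarrow> \<pi> ` \<Sigma> \<subseteq> carrier S \<and> mon_eval S \<pi> ` words_star \<Sigma> = carrier S"

definition idem_problem_sg :: "('a, 'm) monoid_scheme \<Rightarrow> 'b set \<Rightarrow> ('b \<Rightarrow> 'a) \<Rightarrow> 'b list set" where
  "idem_problem_sg S \<Sigma> \<pi> = {w \<in> words_plus \<Sigma>. idempotent_in S (sg_eval S \<pi> w)}"

definition idem_problem_mon :: "('a, 'm) monoid_scheme \<Rightarrow> 'b set \<Rightarrow> ('b \<Rightarrow> 'a) \<Rightarrow> 'b list set" where
  "idem_problem_mon S \<Sigma> \<pi> = {w \<in> words_star \<Sigma>. idempotent_in S (mon_eval S \<pi> w)}"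

definition synt_cong :: "'b set \<Rightarrow> 'b list set \<Rightarrow> 'b list \<Rightarrow> 'b list \<Rightarrow> bool" where
  "synt_cong \<Sigma> L u v \<longleftrightarrow>
     (\<forall>x y. set x \<subseteq> \<Sigma> \<longrightarrow> set y \<subseteq> \<Sigma> \<longrightarrow> (x @ u @ y \<in> L \<longleftrightarrow> x @ v @ y \<in> L))"

definition synt_class :: "'b list set \<Rightarrow> 'b set \<Rightarrow> 'b list set \<Rightarrow> 'b list \<Rightarrow> 'b list set" where
  "synt_class W \<Sigma> L u = {v \<in> W. synt_cong \<Sigma> L u v}"

definition synt_semigroup :: "'b set \<Rightarrow> 'b list set \<Rightarrow> 'b list set monoid" where
  "synt_semigroup \<Sigma> L =
     \<lparr> carrier = synt_class (words_plus \<Sigma>) \<Sigma> L ` words_plus \<Sigma>,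
       mult = (\<lambda>A B. synt_class (words_plus \<Sigma>) \<Sigma> L ((SOME u. u \<in> A) @ (SOME v. v \<in> B))),
       one = undefined \<rparr>"

definition synt_monoid :: "'b set \<Rightarrow> 'b list set \<Rightarrow> 'b list set monoid" where
  "synt_monoid \<Sigma> L =
     \<lparr> carrier = synt_class (words_star \<Sigma>) \<Sigma> L ` words_star \<Sigma>,
       mult = (\<lambda>A B. synt_class (words_star \<Sigma>) \<Sigma> L ((SOME u. u \<in> A) @ (SOME v. v \<in> B))),
       one = synt_class (words_star \<Sigma>) \<Sigma> L [] \<rparr>"

end

theory Submission
  imports Defs
begin

definition lact :: "('a, 'm) monoid_scheme \<Rightarrow> 'a option \<Rightarrow> 'a \<Rightarrow> 'a" where
  "lact S a s = (case a of None \<Rightarrow> s | Some c \<Rightarrow> c \<otimes>\<^bsub>S\<^esub> s)"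

definition ract :: "('a, 'm) monoid_scheme \<Rightarrow> 'a \<Rightarrow> 'a option \<Rightarrow> 'a" where
  "ract S s b = (case b of None \<Rightarrow> s | Some c \<Rightarrow> s \<otimes>\<^bsub>S\<^esub> c)"

definition OC :: "('a, 'm) monoid_scheme \<Rightarrow> 'a option set" where
  "OC S = insert None (Some ` carrier S)"

definition eqv :: "('a, 'm) monoid_scheme \<Rightarrow> 'a \<Rightarrow> 'a \<Rightarrow> bool" where
  "eqv S s t \<longleftrightarrow> (\<forall>a\<in>OC S. \<forall>b\<in>OC S.
     idempotent_in S (ract S (lact S a s) b) \<longleftrightarrow> idempotent_in S (ract S (lact S a t) b))"

definition good :: "('a, 'm) monoid_scheme \<Rightarrow> 'b set \<Rightarrow> 'b list set \<Rightarrow> ('b list \<Rightarrow> 'a)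
   \<Rightarrow> ('b list \<Rightarrow> 'a option) \<Rightarrow> bool" where
  "good S \<Sigma> W E Cx \<longleftrightarrow> is_semigroup S \<and> W \<subseteq> words_star \<Sigma> \<and>
     (\<forall>u\<in>W. E u \<in> carrier S) \<and> E ` W = carrier S \<and>
     (\<forall>u\<in>W. \<forall>v\<in>W. u @ v \<in> W \<and> E (u @ v) = E u \<otimes>\<^bsub>S\<^esub> E v) \<and>
     (\<forall>x\<in>words_star \<Sigma>. \<forall>y\<in>words_star \<Sigma>. \<forall>u\<in>W. x @ u @ y \<in> W \<and>
         E (x @ u @ y) = ract S (lact S (Cx x) (E u)) (Cx y)) \<and>
     (\<forall>x\<in>words_star \<Sigma>. Cx x \<in> OC S) \<and>
     (\<forall>a\<in>OC S. \<exists>x\<in>words_star \<Sigma>. \<forall>s\<in>carrier S.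
         lact S (Cx x) s = lact S a s \<and> ract S s (Cx x) = ract S s a)"

lemma sg_closed: "is_semigroup S \<Longrightarrow> x \<in> carrier S \<Longrightarrow> y \<in> carrier S \<Longrightarrow> x \<otimes>\<^bsub>S\<^esub> y \<in> carrier S"
  unfolding is_semigroup_def by blast

lemma sg_assoc: "is_semigroup S \<Longrightarrow> x \<in> carrier S \<Longrightarrow> y \<in> carrier S \<Longrightarrow> z \<in> carrier S \<Longrightarrow>
   (x \<otimes>\<^bsub>S\<^esub> y) \<otimes>\<^bsub>S\<^esub> z = x \<otimes>\<^bsub>S\<^esub> (y \<otimes>\<^bsub>S\<^esub> z)"
  unfolding is_semigroup_def by blast

lemma eqv_refl: "eqv S s s" unfolding eqv_def by blast
lemma eqv_sym: "eqv S s t \<Longrightarrow> eqv S t s" unfolding eqv_def by blast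
lemma eqv_trans: "eqv S s t \<Longrightarrow> eqv S t r \<Longrightarrow> eqv S s r" unfolding eqv_def by blast

lemma lact_carrier: "is_semigroup S \<Longrightarrow> a \<in> OC S \<Longrightarrow> s \<in> carrier S \<Longrightarrow> lact S a s \<in> carrier S"
  unfolding OC_def lact_def by (auto intro: sg_closed)

lemma ract_carrier: "is_semigroup S \<Longrightarrow> b \<in> OC S \<Longrightarrow> s \<in> carrier S \<Longrightarrow> ract S s b \<in> carrier S"
  unfolding OC_def ract_def by (auto intro: sg_closed)

lemma ctx_split_r: "is_semigroup S \<Longrightarrow> s \<in> carrier S \<Longrightarrow> t \<in> carrier S \<Longrightarrow> a \<in> OC S \<Longrightarrow> b \<in> OC S \<Longrightarrow>
  ract S (lact S a (s \<otimes>\<^bsub>S\<^esub> t)) b = ract S (lact S a s) (Some (ract S t b))"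
  unfolding OC_def lact_def ract_def
  by (auto simp: sg_assoc sg_closed)

lemma ctx_split_l: "is_semigroup S \<Longrightarrow> s \<in> carrier S \<Longrightarrow> t \<in> carrier S \<Longrightarrow> a \<in> OC S \<Longrightarrow> b \<in> OC S \<Longrightarrow>
  ract S (lact S a (s \<otimes>\<^bsub>S\<^esub> t)) b = ract S (lact S (Some (lact S a s)) t) b"
  unfolding OC_def lact_def ract_def
  by (auto simp: sg_assoc sg_closed)

lemma eqv_cong1: "is_semigroup S \<Longrightarrow> s \<in> carrier S \<Longrightarrow> s' \<in> carrier S \<Longrightarrow> t \<in> carrier S \<Longrightarrow>
  eqv S s s' \<Longrightarrow> eqv S (s \<otimes>\<^bsub>S\<^esub> t) (s' \<otimes>\<^bsub>S\<^esub> t)"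
proof -
  assume A: "is_semigroup S" "s \<in> carrier S" "s' \<in> carrier S" "t \<in> carrier S" "eqv S s s'"
  show ?thesis unfolding eqv_def
  proof (intro ballI)
    fix a b assume ab: "a \<in> OC S" "b \<in> OC S"
    have b': "Some (ract S t b) \<in> OC S" using ract_carrier[OF A(1) ab(2) A(4)] unfolding OC_def by blast
    show "idempotent_in S (ract S (lact S a (s \<otimes>\<^bsub>S\<^esub> t)) b) =
          idempotent_in S (ract S (lact S a (s' \<otimes>\<^bsub>S\<^esub> t)) b)"
      using ctx_split_r[OF A(1) A(2) A(4) ab] ctx_split_r[OF A(1) A(3) A(4) ab] A(5) ab(1) b'
      unfolding eqv_def by simp
  qed
qed

lemma eqv_cong2: "is_semigroup S \<Longrightarrow> s \<in> carrier S \<Longrightarrow> t \<in> carrier S \<Longrightarrow> t' \<in> carrier S \<Longrightarrow>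
  eqv S t t' \<Longrightarrow> eqv S (s \<otimes>\<^bsub>S\<^esub> t) (s \<otimes>\<^bsub>S\<^esub> t')"
proof -
  assume A: "is_semigroup S" "s \<in> carrier S" "t \<in> carrier S" "t' \<in> carrier S" "eqv S t t'"
  show ?thesis unfolding eqv_def
  proof (intro ballI)
    fix a b assume ab: "a \<in> OC S" "b \<in> OC S"
    have a': "Some (lact S a s) \<in> OC S" using lact_carrier[OF A(1) ab(1) A(2)] unfolding OC_def by blast
    show "idempotent_in S (ract S (lact S a (s \<otimes>\<^bsub>S\<^esub> t)) b) =
          idempotent_in S (ract S (lact S a (s \<otimes>\<^bsub>S\<^esub> t')) b)"
      using ctx_split_l[OF A(1) A(2) A(3) ab] ctx_split_l[OF A(1) A(2) A(4) ab] A(5) ab(2) a'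
      unfolding eqv_def by simp
  qed
qed

lemma eqv_cong: "is_semigroup S \<Longrightarrow> s \<in> carrier S \<Longrightarrow> s' \<in> carrier S \<Longrightarrow> t \<in> carrier S \<Longrightarrow> t' \<in> carrier S \<Longrightarrow>
  eqv S s s' \<Longrightarrow> eqv S t t' \<Longrightarrow> eqv S (s \<otimes>\<^bsub>S\<^esub> t) (s' \<otimes>\<^bsub>S\<^esub> t')"
  by (meson eqv_cong1 eqv_cong2 eqv_trans)

lemma synt_cong_refl: "synt_cong \<Sigma> L u u" unfolding synt_cong_def by blast
lemma synt_cong_sym: "synt_cong \<Sigma> L u v \<Longrightarrow> synt_cong \<Sigma> L v u" unfolding synt_cong_def by blast
lemma synt_cong_trans: "synt_cong \<Sigma> L u v \<Longrightarrow> synt_cong \<Sigma> L v w \<Longrightarrow> synt_cong \<Sigma> L u w"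
  unfolding synt_cong_def by blast

lemma class_eq_iff: "u \<in> W \<Longrightarrow> v \<in> W \<Longrightarrow>
   synt_class W \<Sigma> L u = synt_class W \<Sigma> L v \<longleftrightarrow> synt_cong \<Sigma> L u v"
proof
  assume uv: "u \<in> W" "v \<in> W" "synt_class W \<Sigma> L u = synt_class W \<Sigma> L v"
  have "v \<in> synt_class W \<Sigma> L v" using uv synt_cong_refl unfolding synt_class_def by blast
  thus "synt_cong \<Sigma> L u v" using uv(3) unfolding synt_class_def by blast
next
  assume "synt_cong \<Sigma> L u v"
  thus "synt_class W \<Sigma> L u = synt_class W \<Sigma> L v"
    unfolding synt_class_def using synt_cong_sym synt_cong_trans by blast
qed

lemma class_rep: "A \<in> synt_class W \<Sigma> L ` W \<Longrightarrow>
   (SOME u. u \<in> A) \<in> W \<and> synt_class W \<Sigma> L (SOME u. u \<in> A) = A"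
proof -
  assume "A \<in> synt_class W \<Sigma> L ` W"
  then obtain u0 where u0: "u0 \<in> W" "A = synt_class W \<Sigma> L u0" by blast
  have "u0 \<in> A" using u0 synt_cong_refl unfolding synt_class_def by blast
  hence r: "(SOME u. u \<in> A) \<in> A" by (rule someI)
  hence "(SOME u. u \<in> A) \<in> W" "synt_cong \<Sigma> L u0 (SOME u. u \<in> A)"
    using u0 unfolding synt_class_def by auto
  thus ?thesis using u0 class_eq_iff[of u0 W "SOME u. u \<in> A" \<Sigma> L] by simp
qed

lemma good_cong_iff:
  assumes g: "good S \<Sigma> W E Cx" and L: "L = {w\<in>W. idempotent_in S (E w)}"
    and u: "u \<in> W" and v: "v \<in> W"
  shows "synt_cong \<Sigma> L u v \<longleftrightarrow> eqv S (E u) (E v)"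
proof
  have sg: "is_semigroup S" using g unfolding good_def by blast
  have Eu: "E u \<in> carrier S" "E v \<in> carrier S" using g u v unfolding good_def by auto
  assume c: "synt_cong \<Sigma> L u v"
  show "eqv S (E u) (E v)" unfolding eqv_def
  proof (intro ballI)
    fix a b assume ab: "a \<in> OC S" "b \<in> OC S"
    obtain x where x: "x \<in> words_star \<Sigma>" "\<forall>s\<in>carrier S. lact S (Cx x) s = lact S a s \<and> ract S s (Cx x) = ract S s a"
      using g ab unfolding good_def by meson
    obtain y where y: "y \<in> words_star \<Sigma>" "\<forall>s\<in>carrier S. lact S (Cx y) s = lact S b s \<and> ract S s (Cx y) = ract S s b"
      using g ab unfolding good_def by meson
    have e: "idempotent_in S (ract S (lact S a (E w)) b) \<longleftrightarrow> x @ w @ y \<in> L" if w: "w \<in> W" for w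
    proof -
      have Ew: "E w \<in> carrier S" using g w unfolding good_def by auto
      have la: "lact S a (E w) \<in> carrier S" using lact_carrier[OF sg ab(1) Ew] .
      have "ract S (lact S a (E w)) b = ract S (lact S (Cx x) (E w)) (Cx y)"
        using x(2) y(2) Ew la by simp
      also have "\<dots> = E (x @ w @ y)" using g x(1) y(1) w unfolding good_def by simp
      finally show ?thesis using L g x(1) y(1) w unfolding good_def by auto
    qed
    show "idempotent_in S (ract S (lact S a (E u)) b) = idempotent_in S (ract S (lact S a (E v)) b)"
      using e[OF u] e[OF v] c x(1) y(1) unfolding synt_cong_def words_star_def by auto
  qed
next
  assume c: "eqv S (E u) (E v)"
  show "synt_cong \<Sigma> L u v" unfolding synt_cong_def
  proof (intro allI impI)
    fix x y assume xy: "set x \<subseteq> \<Sigma>" "set y \<subseteq> \<Sigma>"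
    hence xy': "x \<in> words_star \<Sigma>" "y \<in> words_star \<Sigma>" unfolding words_star_def by auto
    have oc: "Cx x \<in> OC S" "Cx y \<in> OC S" using g xy' unfolding good_def by auto
    have e: "x @ w @ y \<in> L \<longleftrightarrow> idempotent_in S (ract S (lact S (Cx x) (E w)) (Cx y))" if w: "w \<in> W" for w
      using L g xy' w unfolding good_def by auto
    show "(x @ u @ y \<in> L) = (x @ v @ y \<in> L)"
      using e[OF u] e[OF v] c oc unfolding eqv_def by auto
  qed
qed

lemma goodD:
  assumes "good S \<Sigma> W E Cx"
  shows "is_semigroup S" "\<And>u. u \<in> W \<Longrightarrow> E u \<in> carrier S" "E ` W = carrier S"
    "\<And>u v. u \<in> W \<Longrightarrow> v \<in> W \<Longrightarrow> u @ v \<in> W \<and> E (u @ v) = E u \<otimes>\<^bsub>S\<^esub> E v"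
  using assms unfolding good_def by simp_all

lemma general_iso:
  fixes S :: "('a, 'm) monoid_scheme" and \<Sigma>1 :: "'b set" and \<Sigma>2 :: "'c set" and M1 :: "('b list set, 'n1) monoid_scheme" and M2 :: "('c list set, 'n2) monoid_scheme"
  assumes g1: "good S \<Sigma>1 W1 E1 C1" and g2: "good S \<Sigma>2 W2 E2 C2"
    and L1: "L1 = {w\<in>W1. idempotent_in S (E1 w)}" and L2: "L2 = {w\<in>W2. idempotent_in S (E2 w)}"
    and c1: "carrier M1 = synt_class W1 \<Sigma>1 L1 ` W1"
    and m1: "mult M1 = (\<lambda>A B. synt_class W1 \<Sigma>1 L1 ((SOME u. u \<in> A) @ (SOME v. v \<in> B)))"
    and c2: "carrier M2 = synt_class W2 \<Sigma>2 L2 ` W2"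
    and m2: "mult M2 = (\<lambda>A B. synt_class W2 \<Sigma>2 L2 ((SOME u. u \<in> A) @ (SOME v. v \<in> B)))"
  shows "M1 \<cong> M2"
proof -
  define cl1 where "cl1 = synt_class W1 \<Sigma>1 L1"
  define cl2 where "cl2 = synt_class W2 \<Sigma>2 L2"
  have sg: "is_semigroup S" using goodD(1)[OF g1] .
  have E1c: "\<And>u. u \<in> W1 \<Longrightarrow> E1 u \<in> carrier S" using goodD(2)[OF g1] .
  have E2c: "\<And>u. u \<in> W2 \<Longrightarrow> E2 u \<in> carrier S" using goodD(2)[OF g2] .
  have E1a: "\<And>u v. u \<in> W1 \<Longrightarrow> v \<in> W1 \<Longrightarrow> u @ v \<in> W1 \<and> E1 (u @ v) = E1 u \<otimes>\<^bsub>S\<^esub> E1 v"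
    using goodD(4)[OF g1] .
  have E2a: "\<And>u v. u \<in> W2 \<Longrightarrow> v \<in> W2 \<Longrightarrow> u @ v \<in> W2 \<and> E2 (u @ v) = E2 u \<otimes>\<^bsub>S\<^esub> E2 v"
    using goodD(4)[OF g2] .
  define h1 where "h1 s = (SOME w. w \<in> W1 \<and> E1 w = s)" for s
  define h2 where "h2 s = (SOME w. w \<in> W2 \<and> E2 w = s)" for s
  have h1: "\<And>s. s \<in> carrier S \<Longrightarrow> h1 s \<in> W1 \<and> E1 (h1 s) = s"
  proof -
    fix s assume s: "s \<in> carrier S"
    have "s \<in> E1 ` W1" using goodD(3)[OF g1] s by simp
    then obtain w where "w \<in> W1" "s = E1 w" by (rule imageE)
    hence "\<exists>w. w \<in> W1 \<and> E1 w = s" by (intro exI[of _ w]) simp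
    thus "h1 s \<in> W1 \<and> E1 (h1 s) = s" unfolding h1_def by (rule someI_ex)
  qed
  have h2: "\<And>s. s \<in> carrier S \<Longrightarrow> h2 s \<in> W2 \<and> E2 (h2 s) = s"
  proof -
    fix s assume s: "s \<in> carrier S"
    have "s \<in> E2 ` W2" using goodD(3)[OF g2] s by simp
    then obtain w where "w \<in> W2" "s = E2 w" by (rule imageE)
    hence "\<exists>w. w \<in> W2 \<and> E2 w = s" by (intro exI[of _ w]) simp
    thus "h2 s \<in> W2 \<and> E2 (h2 s) = s" unfolding h2_def by (rule someI_ex)
  qed
  have K1: "cl1 u = cl1 v \<longleftrightarrow> eqv S (E1 u) (E1 v)" if uv: "u \<in> W1" "v \<in> W1" for u v
    unfolding cl1_def using class_eq_iff[OF uv] good_cong_iff[OF g1 L1 uv] by simp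
  have K2: "cl2 u = cl2 v \<longleftrightarrow> eqv S (E2 u) (E2 v)" if uv: "u \<in> W2" "v \<in> W2" for u v
    unfolding cl2_def using class_eq_iff[OF uv] good_cong_iff[OF g2 L2 uv] by simp
  have R1: "(SOME r. r \<in> cl1 u) \<in> W1 \<and> cl1 (SOME r. r \<in> cl1 u) = cl1 u" if u: "u \<in> W1" for u
    unfolding cl1_def using u by (intro class_rep imageI)
  have R2: "(SOME r. r \<in> cl2 u) \<in> W2 \<and> cl2 (SOME r. r \<in> cl2 u) = cl2 u" if u: "u \<in> W2" for u
    unfolding cl2_def using u by (intro class_rep imageI)
  have M1m: "mult M1 (cl1 u) (cl1 v) = cl1 (u @ v)" if uv: "u \<in> W1" "v \<in> W1" for u v
  proof -
    define r where "r = (SOME r. r \<in> cl1 u)"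
    define r' where "r' = (SOME r. r \<in> cl1 v)"
    have r: "r \<in> W1" "eqv S (E1 r) (E1 u)" using R1[OF uv(1)] K1[of r u] uv unfolding r_def by auto
    have r': "r' \<in> W1" "eqv S (E1 r') (E1 v)" using R1[OF uv(2)] K1[of r' v] uv unfolding r'_def by auto
    have "eqv S (E1 (r @ r')) (E1 (u @ v))"
      using E1a[OF r(1) r'(1)] E1a[OF uv] eqv_cong[OF sg E1c[OF r(1)] E1c[OF uv(1)] E1c[OF r'(1)] E1c[OF uv(2)] r(2) r'(2)]
      by simp
    hence "cl1 (r @ r') = cl1 (u @ v)" using K1[of "r @ r'" "u @ v"] E1a r(1) r'(1) uv by blast
    thus ?thesis unfolding m1 r_def r'_def cl1_def by simp
  qed
  have M2m: "mult M2 (cl2 u) (cl2 v) = cl2 (u @ v)" if uv: "u \<in> W2" "v \<in> W2" for u v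
  proof -
    define r where "r = (SOME r. r \<in> cl2 u)"
    define r' where "r' = (SOME r. r \<in> cl2 v)"
    have r: "r \<in> W2" "eqv S (E2 r) (E2 u)" using R2[OF uv(1)] K2[of r u] uv unfolding r_def by auto
    have r': "r' \<in> W2" "eqv S (E2 r') (E2 v)" using R2[OF uv(2)] K2[of r' v] uv unfolding r'_def by auto
    have "eqv S (E2 (r @ r')) (E2 (u @ v))"
      using E2a[OF r(1) r'(1)] E2a[OF uv] eqv_cong[OF sg E2c[OF r(1)] E2c[OF uv(1)] E2c[OF r'(1)] E2c[OF uv(2)] r(2) r'(2)]
      by simp
    hence "cl2 (r @ r') = cl2 (u @ v)" using K2[of "r @ r'" "u @ v"] E2a r(1) r'(1) uv by blast
    thus ?thesis unfolding m2 r_def r'_def cl2_def by simp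
  qed
  define \<Phi> where "\<Phi> A = cl2 (h2 (E1 (SOME u. u \<in> A)))" for A
  have Phi: "\<Phi> (cl1 u) = cl2 w" if u: "u \<in> W1" and w: "w \<in> W2" and e: "eqv S (E2 w) (E1 u)" for u w
  proof -
    define r where "r = (SOME r. r \<in> cl1 u)"
    have r: "r \<in> W1" "eqv S (E1 r) (E1 u)" using R1[OF u] K1[of r u] u unfolding r_def by auto
    have hr: "h2 (E1 r) \<in> W2" "E2 (h2 (E1 r)) = E1 r" using h2 E1c r(1) by blast+
    have "eqv S (E2 (h2 (E1 r))) (E2 w)" using hr(2) eqv_trans[OF r(2) eqv_sym[OF e]] by simp
    hence "cl2 (h2 (E1 r)) = cl2 w" using K2 hr(1) w by blast
    thus ?thesis unfolding \<Phi>_def r_def by simp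
  qed
  have Phi0: "\<Phi> (cl1 u) = cl2 (h2 (E1 u))" if u: "u \<in> W1" for u
    using h2[OF E1c[OF u]] by (intro Phi[OF u]) (simp_all add: eqv_refl)
  have "\<Phi> \<in> iso M1 M2"
    unfolding iso_def hom_def bij_betw_def
  proof (intro CollectI conjI)
    show "\<Phi> \<in> carrier M1 \<rightarrow> carrier M2"
      unfolding c1 c2 cl1_def[symmetric] cl2_def[symmetric]
      using Phi0 h2 E1c by fastforce
    show "\<forall>x\<in>carrier M1. \<forall>y\<in>carrier M1. \<Phi> (x \<otimes>\<^bsub>M1\<^esub> y) = \<Phi> x \<otimes>\<^bsub>M2\<^esub> \<Phi> y"
      unfolding c1 cl1_def[symmetric]
    proof (intro ballI)
      fix x y assume "x \<in> cl1 ` W1" "y \<in> cl1 ` W1"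
      then obtain u v where uv: "u \<in> W1" "v \<in> W1" "x = cl1 u" "y = cl1 v" by blast
      define w where "w = h2 (E1 u)"
      define w' where "w' = h2 (E1 v)"
      have w: "w \<in> W2" "E2 w = E1 u" using h2 E1c uv unfolding w_def by blast+
      have w': "w' \<in> W2" "E2 w' = E1 v" using h2 E1c uv unfolding w'_def by blast+
      have "\<Phi> (x \<otimes>\<^bsub>M1\<^esub> y) = \<Phi> (cl1 (u @ v))" using M1m uv by simp
      also have "\<dots> = cl2 (w @ w')"
        using E1a[OF uv(1,2)] E2a[OF w(1) w'(1)] w w' by (intro Phi) (simp_all add: eqv_refl)
      also have "\<dots> = \<Phi> x \<otimes>\<^bsub>M2\<^esub> \<Phi> y"
        using M2m[OF w(1) w'(1)] Phi0 uv unfolding w_def w'_def by simp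
      finally show "\<Phi> (x \<otimes>\<^bsub>M1\<^esub> y) = \<Phi> x \<otimes>\<^bsub>M2\<^esub> \<Phi> y" .
    qed
    show "inj_on \<Phi> (carrier M1)"
      unfolding c1 cl1_def[symmetric]
    proof (rule inj_onI)
      fix x y assume "x \<in> cl1 ` W1" "y \<in> cl1 ` W1" and eq: "\<Phi> x = \<Phi> y"
      then obtain u v where uv: "u \<in> W1" "v \<in> W1" "x = cl1 u" "y = cl1 v" by blast
      have "cl2 (h2 (E1 u)) = cl2 (h2 (E1 v))" using eq Phi0 uv by simp
      hence "eqv S (E1 u) (E1 v)" using K2[of "h2 (E1 u)" "h2 (E1 v)"] h2[OF E1c[OF uv(1)]] h2[OF E1c[OF uv(2)]] by simp
      thus "x = y" using K1 uv by blast
    qed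
    show "\<Phi> ` carrier M1 = carrier M2"
      unfolding c1 c2 cl1_def[symmetric] cl2_def[symmetric]
    proof
      show "\<Phi> ` cl1 ` W1 \<subseteq> cl2 ` W2" using Phi0 h2 E1c by fastforce
      show "cl2 ` W2 \<subseteq> \<Phi> ` cl1 ` W1"
      proof
        fix z assume "z \<in> cl2 ` W2"
        then obtain w where w: "w \<in> W2" "z = cl2 w" by blast
        have u: "h1 (E2 w) \<in> W1" "E1 (h1 (E2 w)) = E2 w" using h1 E2c w(1) by blast+
        have "eqv S (E2 w) (E1 (h1 (E2 w)))" unfolding u(2) by (rule eqv_refl)
        hence "\<Phi> (cl1 (h1 (E2 w))) = z" using Phi[OF u(1) w(1)] w(2) by simp
        thus "z \<in> \<Phi> ` cl1 ` W1" using u(1) by blast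
      qed
    qed
  qed
  thus ?thesis unfolding is_iso_def by blast
qed


lemma sg_eval_Cons: "w \<noteq> [] \<Longrightarrow> sg_eval S \<pi> (a # w) = \<pi> a \<otimes>\<^bsub>S\<^esub> sg_eval S \<pi> w"
  by (cases w) simp_all

lemma sg_eval_carrier:
  assumes sg: "is_semigroup S" and pi: "\<pi> ` \<Sigma> \<subseteq> carrier S"
  shows "set w \<subseteq> \<Sigma> \<Longrightarrow> w \<noteq> [] \<Longrightarrow> sg_eval S \<pi> w \<in> carrier S"
proof (induction w)
  case Nil then show ?case by simp
next
  case (Cons a w)
  show ?case
  proof (cases "w = []")
    case True then show ?thesis using Cons pi by auto
  next
    case False
    then show ?thesis using Cons pi by (simp add: sg_eval_Cons[OF False] sg_closed[OF sg] image_subset_iff)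
  qed
qed

lemma sg_eval_append:
  assumes sg: "is_semigroup S" and pi: "\<pi> ` \<Sigma> \<subseteq> carrier S"
  shows "set u \<subseteq> \<Sigma> \<Longrightarrow> set v \<subseteq> \<Sigma> \<Longrightarrow> u \<noteq> [] \<Longrightarrow> v \<noteq> [] \<Longrightarrow>
    sg_eval S \<pi> (u @ v) = sg_eval S \<pi> u \<otimes>\<^bsub>S\<^esub> sg_eval S \<pi> v"
proof (induction u)
  case Nil then show ?case by simp
next
  case (Cons a u)
  show ?case
  proof (cases "u = []")
    case True then show ?thesis using Cons sg_eval_Cons[of v S \<pi> a] by simp
  next
    case False
    have "sg_eval S \<pi> ((a # u) @ v) = \<pi> a \<otimes>\<^bsub>S\<^esub> sg_eval S \<pi> (u @ v)"
      using sg_eval_Cons[of "u @ v" S \<pi> a] False by simp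
    also have "\<dots> = \<pi> a \<otimes>\<^bsub>S\<^esub> (sg_eval S \<pi> u \<otimes>\<^bsub>S\<^esub> sg_eval S \<pi> v)"
      using Cons False by simp
    also have "\<dots> = (\<pi> a \<otimes>\<^bsub>S\<^esub> sg_eval S \<pi> u) \<otimes>\<^bsub>S\<^esub> sg_eval S \<pi> v"
      using sg_assoc[OF sg] sg_eval_carrier[OF sg pi, of u] sg_eval_carrier[OF sg pi, of v] Cons False pi
      by auto
    also have "\<dots> = sg_eval S \<pi> (a # u) \<otimes>\<^bsub>S\<^esub> sg_eval S \<pi> v"
      by (subst sg_eval_Cons[OF False]) (rule refl)
    finally show ?thesis .
  qed
qed

lemma good_sg:
  assumes sg: "is_semigroup S" and gen: "sg_generating S \<Sigma> \<pi>"
  shows "good S \<Sigma> (words_plus \<Sigma>) (sg_eval S \<pi>)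
           (\<lambda>x. if x = [] then None else Some (sg_eval S \<pi> x))"
proof -
  have pi: "\<pi> ` \<Sigma> \<subseteq> carrier S" and im: "sg_eval S \<pi> ` words_plus \<Sigma> = carrier S"
    using gen unfolding sg_generating_def by auto
  have car: "\<And>u. u \<in> words_plus \<Sigma> \<Longrightarrow> sg_eval S \<pi> u \<in> carrier S"
    using sg_eval_carrier[OF sg pi] unfolding words_plus_def by auto
  have app: "\<And>u v. u \<in> words_plus \<Sigma> \<Longrightarrow> v \<in> words_plus \<Sigma> \<Longrightarrow>
      u @ v \<in> words_plus \<Sigma> \<and> sg_eval S \<pi> (u @ v) = sg_eval S \<pi> u \<otimes>\<^bsub>S\<^esub> sg_eval S \<pi> v"
    using sg_eval_append[OF sg pi] unfolding words_plus_def by auto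
  show ?thesis unfolding good_def
  proof (intro conjI ballI)
    show "is_semigroup S" by fact
    show "words_plus \<Sigma> \<subseteq> words_star \<Sigma>" unfolding words_plus_def words_star_def by auto
    show "\<And>u. u \<in> words_plus \<Sigma> \<Longrightarrow> sg_eval S \<pi> u \<in> carrier S" by (rule car)
    show "sg_eval S \<pi> ` words_plus \<Sigma> = carrier S" by fact
    show "\<And>u v. u \<in> words_plus \<Sigma> \<Longrightarrow> v \<in> words_plus \<Sigma> \<Longrightarrow> u @ v \<in> words_plus \<Sigma>"
      using app by blast
    show "\<And>u v. u \<in> words_plus \<Sigma> \<Longrightarrow> v \<in> words_plus \<Sigma> \<Longrightarrow>
       sg_eval S \<pi> (u @ v) = sg_eval S \<pi> u \<otimes>\<^bsub>S\<^esub> sg_eval S \<pi> v"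
      using app by blast
    fix x y u assume x: "x \<in> words_star \<Sigma>" and y: "y \<in> words_star \<Sigma>" and u: "u \<in> words_plus \<Sigma>"
    have xp: "x \<noteq> [] \<Longrightarrow> x \<in> words_plus \<Sigma>" and yp: "y \<noteq> [] \<Longrightarrow> y \<in> words_plus \<Sigma>"
      using x y unfolding words_plus_def words_star_def by auto
    have uy: "u @ y \<in> words_plus \<Sigma> \<and> sg_eval S \<pi> (u @ y) =
        ract S (sg_eval S \<pi> u) (if y = [] then None else Some (sg_eval S \<pi> y))"
      using app[OF u yp] u by (cases "y = []") (auto simp: ract_def)
    show "x @ u @ y \<in> words_plus \<Sigma>"
      using uy app[OF xp, of "u @ y"] by (cases "x = []") auto
    show "sg_eval S \<pi> (x @ u @ y) =
         ract S (lact S (if x = [] then None else Some (sg_eval S \<pi> x)) (sg_eval S \<pi> u))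
          (if y = [] then None else Some (sg_eval S \<pi> y))"
    proof (cases "x = []")
      case True then show ?thesis using uy by (simp add: lact_def)
    next
      case False
      have "sg_eval S \<pi> (x @ u @ y) = sg_eval S \<pi> x \<otimes>\<^bsub>S\<^esub> sg_eval S \<pi> (u @ y)"
        using app[OF xp[OF False], of "u @ y"] uy by simp
      also have "\<dots> = ract S (lact S (Some (sg_eval S \<pi> x)) (sg_eval S \<pi> u))
          (if y = [] then None else Some (sg_eval S \<pi> y))"
        using uy car[OF xp[OF False]] car[OF u] car[OF yp] sg_assoc[OF sg]
        by (cases "y = []") (auto simp: lact_def ract_def)
      finally show ?thesis using False by simp
    qed
  next
    fix x assume x: "x \<in> words_star \<Sigma>"
    show "(if x = [] then None else Some (sg_eval S \<pi> x)) \<in> OC S"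
      using car[of x] x unfolding OC_def words_plus_def words_star_def by auto
  next
    fix a assume a: "a \<in> OC S"
    show "\<exists>x\<in>words_star \<Sigma>. \<forall>s\<in>carrier S.
       lact S (if x = [] then None else Some (sg_eval S \<pi> x)) s = lact S a s \<and>
       ract S s (if x = [] then None else Some (sg_eval S \<pi> x)) = ract S s a"
    proof (cases a)
      case None then show ?thesis
        by (intro bexI[of _ "[]"]) (auto simp: words_star_def)
    next
      case (Some c)
      hence "c \<in> sg_eval S \<pi> ` words_plus \<Sigma>" using a im unfolding OC_def by auto
      then obtain w where w: "w \<in> words_plus \<Sigma>" "c = sg_eval S \<pi> w" by (rule imageE)
      show ?thesis
        using w Some by (intro bexI[of _ w]) (auto simp: words_plus_def words_star_def)
    qed
  qed
qed

lemma mon_eval_Nil: "mon_eval S \<pi> [] = \<one>\<^bsub>S\<^esub>" by (simp add: mon_eval_def)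
lemma mon_eval_Cons: "mon_eval S \<pi> (a # w) = \<pi> a \<otimes>\<^bsub>S\<^esub> mon_eval S \<pi> w"
  by (simp add: mon_eval_def)

lemma mon_eval_carrier:
  assumes m: "monoid S" and pi: "\<pi> ` \<Sigma> \<subseteq> carrier S"
  shows "set w \<subseteq> \<Sigma> \<Longrightarrow> mon_eval S \<pi> w \<in> carrier S"
  by (induction w) (use m pi in \<open>auto simp: mon_eval_Nil mon_eval_Cons monoid.m_closed monoid.one_closed\<close>)

lemma mon_eval_append:
  assumes m: "monoid S" and pi: "\<pi> ` \<Sigma> \<subseteq> carrier S"
  shows "set u \<subseteq> \<Sigma> \<Longrightarrow> set v \<subseteq> \<Sigma> \<Longrightarrow>
    mon_eval S \<pi> (u @ v) = mon_eval S \<pi> u \<otimes>\<^bsub>S\<^esub> mon_eval S \<pi> v"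
proof (induction u)
  case Nil then show ?case using mon_eval_carrier[OF m pi, of v] m
    by (simp add: mon_eval_Nil monoid.l_one)
next
  case (Cons a u)
  then show ?case using mon_eval_carrier[OF m pi, of u] mon_eval_carrier[OF m pi, of v] m pi
    by (simp add: mon_eval_Cons monoid.m_assoc image_subset_iff)
qed

lemma monoid_sg: "monoid S \<Longrightarrow> is_semigroup S"
  unfolding is_semigroup_def by (auto simp: monoid.m_closed monoid.m_assoc)

lemma good_mon:
  assumes m: "monoid S" and gen: "mon_generating S \<Sigma> \<pi>"
  shows "good S \<Sigma> (words_star \<Sigma>) (mon_eval S \<pi>) (\<lambda>x. Some (mon_eval S \<pi> x))"
proof -
  have sg: "is_semigroup S" using monoid_sg[OF m] .
  have pi: "\<pi> ` \<Sigma> \<subseteq> carrier S" and im: "mon_eval S \<pi> ` words_star \<Sigma> = carrier S"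
    using gen unfolding mon_generating_def by auto
  have car: "\<And>u. u \<in> words_star \<Sigma> \<Longrightarrow> mon_eval S \<pi> u \<in> carrier S"
    using mon_eval_carrier[OF m pi] unfolding words_star_def by auto
  have app: "\<And>u v. u \<in> words_star \<Sigma> \<Longrightarrow> v \<in> words_star \<Sigma> \<Longrightarrow>
      u @ v \<in> words_star \<Sigma> \<and> mon_eval S \<pi> (u @ v) = mon_eval S \<pi> u \<otimes>\<^bsub>S\<^esub> mon_eval S \<pi> v"
    using mon_eval_append[OF m pi] unfolding words_star_def by auto
  show ?thesis unfolding good_def
  proof (intro conjI ballI)
    show "is_semigroup S" by fact
    show "words_star \<Sigma> \<subseteq> words_star \<Sigma>" by simp
    show "\<And>u. u \<in> words_star \<Sigma> \<Longrightarrow> mon_eval S \<pi> u \<in> carrier S" by (rule car)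
    show "mon_eval S \<pi> ` words_star \<Sigma> = carrier S" by fact
    show "\<And>u v. u \<in> words_star \<Sigma> \<Longrightarrow> v \<in> words_star \<Sigma> \<Longrightarrow> u @ v \<in> words_star \<Sigma>"
      using app by blast
    show "\<And>u v. u \<in> words_star \<Sigma> \<Longrightarrow> v \<in> words_star \<Sigma> \<Longrightarrow>
       mon_eval S \<pi> (u @ v) = mon_eval S \<pi> u \<otimes>\<^bsub>S\<^esub> mon_eval S \<pi> v"
      using app by blast
    fix x y u assume x: "x \<in> words_star \<Sigma>" and y: "y \<in> words_star \<Sigma>" and u: "u \<in> words_star \<Sigma>"
    show "x @ u @ y \<in> words_star \<Sigma>" using app x y u by blast
    have "mon_eval S \<pi> (x @ u @ y) = mon_eval S \<pi> x \<otimes>\<^bsub>S\<^esub> (mon_eval S \<pi> u \<otimes>\<^bsub>S\<^esub> mon_eval S \<pi> y)"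
      using app[OF u y] app[OF x, of "u @ y"] by simp
    also have "\<dots> = (mon_eval S \<pi> x \<otimes>\<^bsub>S\<^esub> mon_eval S \<pi> u) \<otimes>\<^bsub>S\<^esub> mon_eval S \<pi> y"
      using car[OF x] car[OF u] car[OF y] sg_assoc[OF sg] by simp
    finally show "mon_eval S \<pi> (x @ u @ y) =
         ract S (lact S (Some (mon_eval S \<pi> x)) (mon_eval S \<pi> u)) (Some (mon_eval S \<pi> y))"
      by (simp add: lact_def ract_def)
  next
    fix x assume x: "x \<in> words_star \<Sigma>"
    show "Some (mon_eval S \<pi> x) \<in> OC S" using car[OF x] unfolding OC_def by auto
  next
    fix a assume a: "a \<in> OC S"
    show "\<exists>x\<in>words_star \<Sigma>. \<forall>s\<in>carrier S.
       lact S (Some (mon_eval S \<pi> x)) s = lact S a s \<and>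
       ract S s (Some (mon_eval S \<pi> x)) = ract S s a"
    proof (cases a)
      case None then show ?thesis using m
        by (intro bexI[of _ "[]"]) (auto simp: words_star_def lact_def ract_def mon_eval_Nil
            monoid.l_one monoid.r_one)
    next
      case (Some c)
      hence "c \<in> mon_eval S \<pi> ` words_star \<Sigma>" using a im unfolding OC_def by auto
      then obtain w where w: "w \<in> words_star \<Sigma>" "c = mon_eval S \<pi> w" by (rule imageE)
      show ?thesis
        using w Some by (intro bexI[of _ w]) auto
    qed
  qed
qed

theorem corollary5:
  fixes I J :: "('a, 'm) monoid_scheme"
    and \<Sigma>1 :: "'b set" and \<pi>1 :: "'b \<Rightarrow> 'a"
    and \<Sigma>2 :: "'c set" and \<pi>2 :: "'c \<Rightarrow> 'a"
    and \<Delta>1 :: "'b set" and \<rho>1 :: "'b \<Rightarrow> 'a"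
    and \<Delta>2 :: "'c set" and \<rho>2 :: "'c \<Rightarrow> 'a"
  shows
    "(inverse_semigroup I \<and> sg_generating I \<Sigma>1 \<pi>1 \<and> sg_generating I \<Sigma>2 \<pi>2 \<longrightarrow>
        synt_semigroup \<Sigma>1 (idem_problem_sg I \<Sigma>1 \<pi>1)
          \<cong> synt_semigroup \<Sigma>2 (idem_problem_sg I \<Sigma>2 \<pi>2))
     \<and>
     (inverse_monoid J \<and> mon_generating J \<Delta>1 \<rho>1 \<and> mon_generating J \<Delta>2 \<rho>2 \<longrightarrow>
        synt_monoid \<Delta>1 (idem_problem_mon J \<Delta>1 \<rho>1)
          \<cong> synt_monoid \<Delta>2 (idem_problem_mon J \<Delta>2 \<rho>2))"
proof (intro conjI impI)
  assume A: "inverse_semigroup I \<and> sg_generating I \<Sigma>1 \<pi>1 \<and> sg_generating I \<Sigma>2 \<pi>2"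
  have sg: "is_semigroup I" using A unfolding inverse_semigroup_def by blast
  show "synt_semigroup \<Sigma>1 (idem_problem_sg I \<Sigma>1 \<pi>1) \<cong> synt_semigroup \<Sigma>2 (idem_problem_sg I \<Sigma>2 \<pi>2)"
    by (rule general_iso[OF good_sg[OF sg] good_sg[OF sg]])
       (use A in \<open>simp_all add: idem_problem_sg_def synt_semigroup_def\<close>)
next
  assume A: "inverse_monoid J \<and> mon_generating J \<Delta>1 \<rho>1 \<and> mon_generating J \<Delta>2 \<rho>2"
  have m: "monoid J" using A unfolding inverse_monoid_def by blast
  show "synt_monoid \<Delta>1 (idem_problem_mon J \<Delta>1 \<rho>1) \<cong> synt_monoid \<Delta>2 (idem_problem_mon J \<Delta>2 \<rho>2)"
    by (rule general_iso[OF good_mon[OF m] good_mon[OF m]])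
       (use A in \<open>simp_all add: idem_problem_mon_def synt_monoid_def\<close>)
qed

end
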